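(* Let $G$ be a finite group and let $M,N_1,N_2$ be normal subgroups of $G$. If $(G,N_1,M)$ and $(G,N_2,M)$ are Camina triples, then $(G,N_1\cap N_2,M)$ is a Camina triple.
   Context: For normal subgroups $M,N$ of a finite group $G$, $(G,N,M)$ is a Camina triple if $1<M\le N<G$ and every $g\in G\setminus N$ is conjugate in $G$ to every element of the coset $gM$. *)

theory Defs
  imports "HOL-Algebra.Algebra"
begin

definition conjugate_in :: "('a, 'b) monoid_scheme \<Rightarrow> 'a \<Rightarrow> 'a \<Rightarrow> bool" where
  "conjugate_in G g h \<longleftrightarrow>
     (\<exists>x\<in>carrier G. x \<otimes>\<^bsub>G\<^esub> g \<otimes>\<^bsub>G\<^esub> inv\<^bsub>G\<^esub> x = h)"

definition camina_triple :: "('a, 'b) monoid_scheme \<Rightarrow> 'a set \<Rightarrow> 'a set \<Rightarrow> bool" where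
  "camina_triple G N M \<longleftrightarrow>
     M \<lhd> G \<and> N \<lhd> G \<and>
     M \<noteq> {\<one>\<^bsub>G\<^esub>} \<and> M \<subseteq> N \<and> N \<noteq> carrier G \<and>
     (\<forall>g \<in> carrier G - N. \<forall>h \<in> g <#\<^bsub>G\<^esub> M. conjugate_in G g h)"

end

theory Submission
  imports Defs
begin

theorem mainTheorem7:
  fixes G (structure)
  assumes "group G" and "finite (carrier G)"
    and "M \<lhd> G" and "N1 \<lhd> G" and "N2 \<lhd> G"
    and "camina_triple G N1 M" and "camina_triple G N2 M"
  shows "camina_triple G (N1 \<inter> N2) M"
proof -
  have n: "N1 \<inter> N2 \<lhd> G"
    using group.normal_subgroup_intersect[OF assms(1) assms(4) assms(5)] .
  have c1: "M \<noteq> {\<one>} \<and> M \<subseteq> N1 \<and> N1 \<noteq> carrier G \<and>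
     (\<forall>g \<in> carrier G - N1. \<forall>h \<in> g <# M. conjugate_in G g h)"
    using assms(6) unfolding camina_triple_def by (elim conjE) (intro conjI)
  have c2: "M \<subseteq> N2 \<and>
     (\<forall>g \<in> carrier G - N2. \<forall>h \<in> g <# M. conjugate_in G g h)"
    using assms(7) unfolding camina_triple_def by (elim conjE) (intro conjI)
  have ne: "N1 \<inter> N2 \<noteq> carrier G"
  proof
    assume "N1 \<inter> N2 = carrier G"
    hence "carrier G \<subseteq> N1" by auto
    moreover have "N1 \<subseteq> carrier G" using assms(4) normal_imp_subgroup subgroup.subset by blast
    ultimately show False using c1 by auto
  qed
  have cc: "\<forall>g \<in> carrier G - (N1 \<inter> N2). \<forall>h \<in> g <# M. conjugate_in G g h"
  proof (intro ballI)
    fix g h assume g: "g \<in> carrier G - (N1 \<inter> N2)" and h: "h \<in> g <# M"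
    show "conjugate_in G g h"
    proof (cases "g \<in> N1")
      case True then have "g \<in> carrier G - N2" using g by auto
      then show ?thesis using c2 h by blast
    next
      case False then have "g \<in> carrier G - N1" using g by auto
      then show ?thesis using c1 h by blast
    qed
  qed
  show ?thesis unfolding camina_triple_def
    using assms(3) n ne cc c1 c2 by auto
qed

end
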